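(* Let $f$ be a periodic traveling wave of speed $c$ ($c^2\neq 1$). For $\beta\in\mathbb{R}$, the imaginary number $\lambda=i\beta$ lies in $\sigma(\mathrm{P})$ if and only if it lies in $\sigma(\mathrm{Q})$.
   Context: A traveling wave of speed $c$ ($c^2\neq1$) is a real solution $f$ of $(c^2-1)f''+\sin f=0$, with energy $E$ given by $\tfrac12(c^2-1)(f')^2+1-\cos f=E$; periodic traveling waves are librational ($0<E<2$) or rotational ($E<0$ if $c^2<1$, $E>2$ if $c^2>1$). Let $\gamma=1/(c^2-1)$. $\sigma(\mathrm{P})$ is the set of $\lambda\in\mathbb{C}$ for which $p''-2c\gamma\lambda p'+\gamma(\lambda^2+\cos f(z))p=0$ has a nontrivial solution bounded on $\mathbb{R}$. $\sigma(\mathrm{Q})$ is the set of $\lambda\in\mathbb{C}$ for which $q''+\gamma\cos(f(z))q=\mu q$ with $\mu=\gamma^2\lambda^2$ has a nontrivial solution bounded on $\mathbb{R}$. *)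

theory Defs
  imports "HOL-Analysis.Analysis"
begin

definition traveling_wave :: "real \<Rightarrow> (real \<Rightarrow> real) \<Rightarrow> bool" where
  "traveling_wave c f \<longleftrightarrow> c\<^sup>2 \<noteq> 1 \<and>
     (\<exists>f1 f2. \<forall>z. (f has_real_derivative f1 z) (at z) \<and>
                    (f1 has_real_derivative f2 z) (at z) \<and>
                    (c\<^sup>2 - 1) * f2 z + sin (f z) = 0)"

text \<open>Energy E = (1/2)(c^2-1)(f')^2 + 1 - cos f (constant along solutions).\<close>
definition tw_energy :: "real \<Rightarrow> (real \<Rightarrow> real) \<Rightarrow> real \<Rightarrow> real" where
  "tw_energy c f z = 1/2 * (c\<^sup>2 - 1) * (deriv f z)\<^sup>2 + 1 - cos (f z)"

definition periodic_traveling_wave :: "real \<Rightarrow> (real \<Rightarrow> real) \<Rightarrow> bool" where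
  "periodic_traveling_wave c f \<longleftrightarrow> traveling_wave c f \<and>
     (let E = tw_energy c f 0 in
        (0 < E \<and> E < 2) \<or> (c\<^sup>2 < 1 \<and> E < 0) \<or> (c\<^sup>2 > 1 \<and> E > 2))"

definition tw_gamma :: "real \<Rightarrow> real" where
  "tw_gamma c = 1 / (c\<^sup>2 - 1)"

definition sigmaP :: "real \<Rightarrow> (real \<Rightarrow> real) \<Rightarrow> complex set" where
  "sigmaP c f = {l. \<exists>p p1 p2 :: real \<Rightarrow> complex.
     (\<forall>z. (p has_vector_derivative p1 z) (at z) \<and>
          (p1 has_vector_derivative p2 z) (at z) \<and>
          p2 z - 2 * of_real c * of_real (tw_gamma c) * l * p1 z
            + of_real (tw_gamma c) * (l\<^sup>2 + of_real (cos (f z))) * p z = 0) \<and>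
     bounded (range p) \<and> (\<exists>z. p z \<noteq> 0)}"

definition sigmaQ :: "real \<Rightarrow> (real \<Rightarrow> real) \<Rightarrow> complex set" where
  "sigmaQ c f = {l. \<exists>q q1 q2 :: real \<Rightarrow> complex.
     (\<forall>z. (q has_vector_derivative q1 z) (at z) \<and>
          (q1 has_vector_derivative q2 z) (at z) \<and>
          q2 z + of_real (tw_gamma c) * of_real (cos (f z)) * q z
            = of_real ((tw_gamma c)\<^sup>2) * l\<^sup>2 * q z) \<and>
     bounded (range q) \<and> (\<exists>z. q z \<noteq> 0)}"

end

theory Submission
  imports Defs
begin

lemma E_deriv: "((\<lambda>z::real. exp ((b::complex) * of_real z)) has_vector_derivative (b * exp (b * of_real z))) (at z)"
proof -
  have "((\<lambda>w. exp (b * w)) has_field_derivative (exp (b * of_real z) * b)) (at (of_real z))"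
    by (auto intro!: derivative_eq_intros)
  from has_vector_derivative_real_field[OF this] show ?thesis by (simp add: mult.commute)
qed

lemma shift_derivs:
  fixes p p1 p2 :: "real \<Rightarrow> complex" and b :: complex
  assumes "(p has_vector_derivative p1 z) (at z)" "\<And>z. (p has_vector_derivative p1 z) (at z)"
    "(p1 has_vector_derivative p2 z) (at z)"
  shows "((\<lambda>z. exp (b * of_real z) * p z) has_vector_derivative
            exp (b * of_real z) * (p1 z + b * p z)) (at z)"
    "((\<lambda>z. exp (b * of_real z) * (p1 z + b * p z)) has_vector_derivative
            exp (b * of_real z) * (p2 z + 2 * b * p1 z + b\<^sup>2 * p z)) (at z)"
proof -
  have "((\<lambda>z. exp (b * of_real z) * p z) has_vector_derivative
            (exp (b * of_real z) * p1 z + (b * exp (b * of_real z)) * p z)) (at z)"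
    by (rule has_vector_derivative_mult[OF E_deriv assms(1)])
  then show "((\<lambda>z. exp (b * of_real z) * p z) has_vector_derivative
            exp (b * of_real z) * (p1 z + b * p z)) (at z)"
    by (simp add: algebra_simps)
  have d: "((\<lambda>z. p1 z + b * p z) has_vector_derivative (p2 z + b * p1 z)) (at z)"
    by (intro has_vector_derivative_add has_vector_derivative_mult_right assms)
  have "((\<lambda>z. exp (b * of_real z) * (p1 z + b * p z)) has_vector_derivative
            (exp (b * of_real z) * (p2 z + b * p1 z) + (b * exp (b * of_real z)) * (p1 z + b * p z))) (at z)"
    by (rule has_vector_derivative_mult[OF E_deriv d])
  then show "((\<lambda>z. exp (b * of_real z) * (p1 z + b * p z)) has_vector_derivative
            exp (b * of_real z) * (p2 z + 2 * b * p1 z + b\<^sup>2 * p z)) (at z)"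
    by (simp add: algebra_simps power2_eq_square)
qed

lemma norm_E: "norm (exp (\<i> * of_real t * of_real z)) = 1"
  by (metis exp_of_real mult.assoc norm_exp_i_times of_real_mult)

lemma bounded_shift:
  fixes p :: "real \<Rightarrow> complex"
  assumes "bounded (range p)"
  shows "bounded (range (\<lambda>z. exp (\<i> * of_real t * of_real z) * p z))"
proof -
  from assms obtain B where B: "\<And>z. norm (p z) \<le> B"
    by (auto simp: bounded_iff)
  show ?thesis unfolding bounded_iff
    by (rule exI[of _ B]) (auto simp: norm_mult norm_E B)
qed

lemma alg1:
  fixes a g l C P P1 P2 E :: complex
  assumes key: "a\<^sup>2 = g * l\<^sup>2 + g2 * l\<^sup>2"
    and E: "P2 - 2 * a * P1 + g * (l\<^sup>2 + C) * P = 0"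
  shows "E * (P2 + 2 * (-a) * P1 + (-a)\<^sup>2 * P) + g * C * (E * P) = g2 * l\<^sup>2 * (E * P)"
proof -
  have p2: "P2 = 2 * a * P1 - g * (l\<^sup>2 + C) * P" using E by (simp add: algebra_simps)
  show ?thesis unfolding p2 power2_minus key by (simp add: algebra_simps)
qed
lemma alg2:
  fixes a g l C Q Q1 Q2 E :: complex
  assumes key: "a\<^sup>2 = g * l\<^sup>2 + g2 * l\<^sup>2"
    and E: "Q2 + g * C * Q = g2 * l\<^sup>2 * Q"
  shows "E * (Q2 + 2 * a * Q1 + a\<^sup>2 * Q) - 2 * a * (E * (Q1 + a * Q)) + g * (l\<^sup>2 + C) * (E * Q) = 0"
proof -
  have q2: "Q2 = g2 * l\<^sup>2 * Q - g * C * Q" using E by (simp add: algebra_simps)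
  have "E * (Q2 + 2 * a * Q1 + a\<^sup>2 * Q) - 2 * a * (E * (Q1 + a * Q)) + g * (l\<^sup>2 + C) * (E * Q)
     = E * Q * (g * l\<^sup>2 + g2 * l\<^sup>2 - a\<^sup>2)" unfolding q2 by (simp add: algebra_simps power2_eq_square)
  then show ?thesis using key by simp
qed
lemma keyl:
  fixes c g :: real and l :: complex
  assumes "g * (c\<^sup>2 - 1) = 1"
  shows "(of_real c * of_real g * l)\<^sup>2 = of_real g * l\<^sup>2 + of_real (g\<^sup>2) * l\<^sup>2"
proof -
  have h: "c\<^sup>2 * g = 1 + g" using assms by (simp add: algebra_simps)
  have "(of_real c * of_real g * l)\<^sup>2 = of_real (c\<^sup>2 * g) * of_real g * l\<^sup>2"
    by (simp add: power2_eq_square)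
  also have "\<dots> = of_real g * l\<^sup>2 + of_real (g\<^sup>2) * l\<^sup>2" unfolding h
    by (simp add: algebra_simps power2_eq_square)
  finally show ?thesis .
qed

theorem corollary3p2:
  fixes c \<beta> :: real and f :: "real \<Rightarrow> real"
  assumes "periodic_traveling_wave c f"
  shows "\<i> * of_real \<beta> \<in> sigmaP c f \<longleftrightarrow> \<i> * of_real \<beta> \<in> sigmaQ c f"
proof -
  have c1: "c\<^sup>2 \<noteq> 1" using assms
    unfolding periodic_traveling_wave_def traveling_wave_def by auto
  define g where "g = tw_gamma c"
  define l where "l = \<i> * of_real \<beta>"
  define a where "a = of_real c * of_real g * l"
  have gid: "g * (c\<^sup>2 - 1) = 1" using c1 by (simp add: g_def tw_gamma_def)
  have key: "a\<^sup>2 = of_real g * l\<^sup>2 + of_real (g\<^sup>2) * l\<^sup>2"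
    unfolding a_def by (rule keyl[OF gid])
  have aimag: "a = \<i> * of_real (c * g * \<beta>)" unfolding a_def l_def by simp
  have nz: "\<And>z. exp (b * of_real z) \<noteq> 0" for b :: complex by simp
  show ?thesis
  proof
    assume "\<i> * of_real \<beta> \<in> sigmaP c f"
    then obtain p p1 p2 where D: "\<And>z. (p has_vector_derivative p1 z) (at z)"
      "\<And>z. (p1 has_vector_derivative p2 z) (at z)"
      and E: "\<And>z. p2 z - 2 * of_real c * of_real g * l * p1 z
            + of_real g * (l\<^sup>2 + of_real (cos (f z))) * p z = 0"
      and bd: "bounded (range p)" and ex: "\<exists>z. p z \<noteq> 0"
      unfolding sigmaP_def g_def l_def by blast
    obtain z0 where z0: "p z0 \<noteq> 0" using ex by blast
    let ?b = "-a"
    show "\<i> * of_real \<beta> \<in> sigmaQ c f"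
      unfolding sigmaQ_def
    proof (intro CollectI exI conjI allI)
      fix z
      show "((\<lambda>z. exp (?b * of_real z) * p z) has_vector_derivative
            exp (?b * of_real z) * (p1 z + ?b * p z)) (at z)"
        by (rule shift_derivs(1)[OF D(1) D(1) D(2)])
      show "((\<lambda>z. exp (?b * of_real z) * (p1 z + ?b * p z)) has_vector_derivative
            exp (?b * of_real z) * (p2 z + 2 * ?b * p1 z + ?b\<^sup>2 * p z)) (at z)"
        by (rule shift_derivs(2)[OF D(1) D(1) D(2)])
      show "exp (?b * of_real z) * (p2 z + 2 * ?b * p1 z + ?b\<^sup>2 * p z) +
        complex_of_real (tw_gamma c) * complex_of_real (cos (f z)) * (exp (?b * of_real z) * p z) =
        complex_of_real ((tw_gamma c)\<^sup>2) * (\<i> * complex_of_real \<beta>)\<^sup>2 * (exp (?b * of_real z) * p z)"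
        unfolding g_def[symmetric] l_def[symmetric]
        by (rule alg1[OF key]) (use E[of z] in \<open>simp add: a_def mult.assoc\<close>)
    next
      show "bounded (range (\<lambda>z. exp (- a * complex_of_real z) * p z))"
        using bounded_shift[OF bd, of "- c * g * \<beta>"] unfolding aimag by simp
      from z0 show "exp (- a * complex_of_real z0) * p z0 \<noteq> 0" by simp
    qed
  next
    assume "\<i> * of_real \<beta> \<in> sigmaQ c f"
    then obtain p p1 p2 where D: "\<And>z. (p has_vector_derivative p1 z) (at z)"
      "\<And>z. (p1 has_vector_derivative p2 z) (at z)"
      and E: "\<And>z. p2 z + of_real g * of_real (cos (f z)) * p z = of_real (g\<^sup>2) * l\<^sup>2 * p z"
      and bd: "bounded (range p)" and ex: "\<exists>z. p z \<noteq> 0"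
      unfolding sigmaQ_def g_def l_def by blast
    obtain z0 where z0: "p z0 \<noteq> 0" using ex by blast
    show "\<i> * of_real \<beta> \<in> sigmaP c f"
      unfolding sigmaP_def
    proof (intro CollectI exI conjI allI)
      fix z
      show "((\<lambda>z. exp (a * of_real z) * p z) has_vector_derivative
            exp (a * of_real z) * (p1 z + a * p z)) (at z)"
        by (rule shift_derivs(1)[OF D(1) D(1) D(2)])
      show "((\<lambda>z. exp (a * of_real z) * (p1 z + a * p z)) has_vector_derivative
            exp (a * of_real z) * (p2 z + 2 * a * p1 z + a\<^sup>2 * p z)) (at z)"
        by (rule shift_derivs(2)[OF D(1) D(1) D(2)])
      show "exp (a * of_real z) * (p2 z + 2 * a * p1 z + a\<^sup>2 * p z) -
        2 * complex_of_real c * complex_of_real (tw_gamma c) * (\<i> * complex_of_real \<beta>) * (exp (a * of_real z) * (p1 z + a * p z)) +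
        complex_of_real (tw_gamma c) * ((\<i> * complex_of_real \<beta>)\<^sup>2 + complex_of_real (cos (f z))) * (exp (a * of_real z) * p z) = 0"
        unfolding g_def[symmetric] l_def[symmetric]
        using alg2[OF key E[of z], of "exp (a * of_real z)" "p1 z"] by (simp add: a_def mult.assoc)
    next
      show "bounded (range (\<lambda>z. exp (a * complex_of_real z) * p z))"
        using bounded_shift[OF bd, of "c * g * \<beta>"] unfolding aimag by simp
      from z0 show "exp (a * complex_of_real z0) * p z0 \<noteq> 0" by simp
    qed
  qed
qed

end
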